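(* Let $G$ be a torsion abelian group. If there exists a surjective endomorphism $\varphi\colon G\to G$ that is positively expansive, then $G$ is finite.
   Context: $\mathbb N=\{0,1,2,\dots\}$. An endomorphism $\varphi\colon G\to G$ of an abelian group is positively expansive if there is a finite subgroup $S\leq G$ such that for every finite subgroup $F\leq G$ there is $n\in\mathbb N$ with $F\subseteq\sum_{k=0}^n\varphi^kS$. *)

theory Defs
  imports "HOL-Algebra.Algebra"
begin

text \<open>Abelian groups are written multiplicatively (HOL-Algebra convention).
  orbit_sum G phi S n is the subgroup sum S + phi S + ... + phi^n S,
  realised as the iterated complex product of the sets phi^k S.\<close>

fun orbit_sum :: "('a, 'b) monoid_scheme \<Rightarrow> ('a \<Rightarrow> 'a) \<Rightarrow> 'a set \<Rightarrow> nat \<Rightarrow> 'a set" where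
  "orbit_sum G phi S 0 = S"
| "orbit_sum G phi S (Suc n) = orbit_sum G phi S n <#>\<^bsub>G\<^esub> ((phi ^^ Suc n) ` S)"

definition positively_expansive :: "('a, 'b) monoid_scheme \<Rightarrow> ('a \<Rightarrow> 'a) \<Rightarrow> bool" where
  "positively_expansive G phi \<longleftrightarrow>
     (\<exists>S. subgroup S G \<and> finite S \<and>
        (\<forall>F. subgroup F G \<and> finite F \<longrightarrow> (\<exists>n. F \<subseteq> orbit_sum G phi S n)))"

definition torsion_group :: "('a, 'b) monoid_scheme \<Rightarrow> bool" where
  "torsion_group G \<longleftrightarrow> (\<forall>x \<in> carrier G. \<exists>n::nat. n > 0 \<and> x [^]\<^bsub>G\<^esub> n = \<one>\<^bsub>G\<^esub>)"

end

theory Submission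
  imports Defs
begin

lemma funpow_hom:
  assumes "phi \<in> hom G G"
  shows "(phi ^^ n) \<in> hom G G"
proof (induction n)
  case 0
  then show ?case by (auto simp: hom_def)
next
  case (Suc n)
  then show ?case using assms by (auto simp: hom_def Pi_def)
qed

lemma hom_img_subgroup:
  assumes "group G" "f \<in> hom G G" "subgroup I G"
  shows "subgroup (f ` I) G"
proof -
  have "group_hom G G f" using assms by (simp add: group_hom_def group_hom_axioms_def)
  then show ?thesis using group_hom.subgroup_img_is_subgroup assms(3) by blast
qed

lemma hom_set_mult:
  assumes "f \<in> hom G G" "A \<subseteq> carrier G" "B \<subseteq> carrier G"
  shows "f ` (A <#>\<^bsub>G\<^esub> B) = f ` A <#>\<^bsub>G\<^esub> f ` B"
proof -
  have "\<And>a b. a \<in> A \<Longrightarrow> b \<in> B \<Longrightarrow> f (a \<otimes>\<^bsub>G\<^esub> b) = f a \<otimes>\<^bsub>G\<^esub> f b"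
    using assms by (meson hom_mult subsetD)
  then show ?thesis unfolding set_mult_def by (auto simp: image_UN)
qed

lemma (in group) subset_set_mult_r:
  "H \<subseteq> carrier G \<Longrightarrow> \<one> \<in> K \<Longrightarrow> H \<subseteq> H <#> K"
  unfolding set_mult_def by force

lemma (in group) subset_set_mult_l:
  "H \<subseteq> carrier G \<Longrightarrow> \<one> \<in> K \<Longrightarrow> H \<subseteq> K <#> H"
  unfolding set_mult_def by force

lemma finite_set_mult: "finite A \<Longrightarrow> finite B \<Longrightarrow> finite (A <#>\<^bsub>G\<^esub> B)"
  unfolding set_mult_def by auto

lemma (in group) set_mult_absorb:
  assumes "subgroup H G" "S \<subseteq> H" "\<one> \<in> S"
  shows "S <#> H = H"
proof
  show "S <#> H \<subseteq> H" using assms unfolding set_mult_def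
    by (auto intro: subgroup.m_closed)
  show "H \<subseteq> S <#> H" using subset_set_mult_l[OF subgroup.subset[OF assms(1)] assms(3)] .
qed

lemma cyclic_finite:
  fixes G (structure)
  assumes "group G" "torsion_group G" "a \<in> carrier G"
  shows "finite (generate G {a}) \<and> subgroup (generate G {a}) G"
proof -
  interpret group G by fact
  obtain n :: nat where "n > 0" "a [^] n = \<one>" using assms unfolding torsion_group_def by blast
  then have "ord a \<noteq> 0" using ord_eq_0[OF assms(3)] by auto
  then have "card (generate G {a}) \<noteq> 0" using generate_pow_card[OF assms(3)] by simp
  then show ?thesis using card_ge_0_finite generate_is_subgroup assms(3) by auto
qed

lemma finite_subgroup_containing:
  fixes G (structure)
  assumes "comm_group G" "torsion_group G" "finite A" "A \<subseteq> carrier G"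
  shows "\<exists>F. subgroup F G \<and> finite F \<and> A \<subseteq> F"
  using assms(3,4)
proof (induction A rule: finite_induct)
  case empty
  interpret comm_group G by fact
  show ?case using cyclic_finite[OF is_group assms(2) one_closed] by blast
next
  case (insert a B)
  interpret comm_group G by fact
  obtain F where F: "subgroup F G" "finite F" "B \<subseteq> F" using insert by auto
  have a: "a \<in> carrier G" using insert by auto
  define C where "C = generate G {a}"
  have C: "finite C" "subgroup C G" using cyclic_finite[OF is_group assms(2) a] C_def by auto
  have "a \<in> C" unfolding C_def by (simp add: generate.incl)
  have "subgroup (F <#> C) G" by (rule mult_subgroups[OF F(1) C(2)])
  moreover have "finite (F <#> C)" using finite_set_mult F(2) C(1) by blast
  moreover have "F \<subseteq> F <#> C"
    using subset_set_mult_r subgroup.subset[OF F(1)] subgroup.one_closed[OF C(2)] by blast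
  moreover have "C \<subseteq> F <#> C"
    using subset_set_mult_l subgroup.subset[OF C(2)] subgroup.one_closed[OF F(1)] by blast
  ultimately show ?case using F(3) \<open>a \<in> C\<close> by blast
qed

theorem theorem4p2:
  fixes G (structure) and phi :: "'a \<Rightarrow> 'a"
  assumes "comm_group G"
    and "torsion_group G"
    and "phi \<in> hom G G"
    and "phi ` carrier G = carrier G"
    and "positively_expansive G phi"
  shows "finite (carrier G)"
proof -
  interpret comm_group G by fact
  obtain S where S: "subgroup S G" "finite S"
    and exp: "\<And>F. subgroup F G \<Longrightarrow> finite F \<Longrightarrow> \<exists>n. F \<subseteq> orbit_sum G phi S n"
    using assms(5) unfolding positively_expansive_def by blast
  define T where "T = orbit_sum G phi S"
  have T0: "T 0 = S" and TS: "\<And>n. T (Suc n) = T n <#> (phi ^^ Suc n) ` S"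
    unfolding T_def by auto
  have sub: "subgroup (T n) G \<and> finite (T n)" for n
  proof (induction n)
    case 0 then show ?case using S T0 by simp
  next
    case (Suc n)
    have "subgroup ((phi ^^ Suc n) ` S) G"
      using hom_img_subgroup[OF is_group funpow_hom[OF assms(3)] S(1)] .
    moreover have "finite (T (Suc n))" unfolding TS
      by (rule finite_set_mult) (use Suc S(2) in auto)
    ultimately show ?case using Suc TS mult_subgroups by auto
  qed
  have Tc: "T n \<subseteq> carrier G" for n using sub subgroup.subset by blast
  have Tmono1: "T n \<subseteq> T (Suc n)" for n
  proof -
    have "\<one> \<in> (phi ^^ Suc n) ` S"
      using hom_img_subgroup[OF is_group funpow_hom[OF assms(3)] S(1)] subgroup.one_closed by blast
    then show ?thesis using TS subset_set_mult_r Tc by metis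
  qed
  have Tmono: "m \<le> n \<Longrightarrow> T m \<subseteq> T n" for m n
    using lift_Suc_mono_le[of T, OF Tmono1] by blast
  have phiS: "phi ` (phi ^^ n) ` S = (phi ^^ Suc n) ` S" for n
    by (simp add: image_comp)
  have Simg: "(phi ^^ n) ` S \<subseteq> carrier G" for n
    using hom_img_subgroup[OF is_group funpow_hom[OF assms(3)] S(1)] subgroup.subset by blast
  have key: "T (Suc n) = S <#> phi ` (T n)" for n
  proof (induction n)
    case 0
    show ?case using TS[of 0] T0 by simp
  next
    case (Suc n)
    have "T (Suc (Suc n)) = (S <#> phi ` (T n)) <#> (phi ^^ Suc (Suc n)) ` S"
      using TS Suc by simp
    also have "\<dots> = S <#> (phi ` (T n) <#> phi ` (phi ^^ Suc n) ` S)"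
    proof -
      have "phi ` T n \<subseteq> carrier G"
        using hom_img_subgroup[OF is_group assms(3)] sub subgroup.subset by blast
      then show ?thesis unfolding phiS[of "Suc n"]
        by (rule set_mult_assoc[OF subgroup.subset[OF S(1)] _ Simg])
    qed
    also have "\<dots> = S <#> phi ` (T (Suc n))"
      unfolding TS[of n] hom_set_mult[OF assms(3) Tc Simg] ..
    finally show ?case .
  qed
  have "S \<subseteq> phi ` carrier G" using assms(4) subgroup.subset[OF S(1)] by simp
  then obtain A where A: "A \<subseteq> carrier G" "finite A" "S = phi ` A"
    using finite_subset_image[OF S(2)] by blast
  obtain F where F: "subgroup F G" "finite F" "A \<subseteq> F"
    using finite_subgroup_containing[OF assms(1,2) A(2,1)] by blast
  obtain n where n: "F \<subseteq> T n" using exp[OF F(1,2)] unfolding T_def by blast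
  have SphiT: "S \<subseteq> phi ` T n" using A(3) F(3) n by blast
  have imgsub: "subgroup (phi ` T k) G" for k
    using hom_img_subgroup[OF is_group assms(3)] sub by blast
  have stab: "T (Suc n) = phi ` T n"
    using key[of n] set_mult_absorb[OF imgsub SphiT subgroup.one_closed[OF S(1)]] by simp
  have eq: "T (Suc n) = T n"
  proof -
    have "card (T (Suc n)) \<le> card (T n)" unfolding stab using sub card_image_le by blast
    then show ?thesis using card_seteq[OF _ Tmono1[of n]] sub[of "Suc n"] by blast
  qed
  have all: "n \<le> k \<Longrightarrow> T k = T n" for k
  proof (induction k rule: dec_induct)
    case base then show ?case by simp
  next
    case (step k)
    have "T (Suc k) = S <#> phi ` T k" by (rule key)
    also have "\<dots> = S <#> phi ` T n" using step by simp
    also have "\<dots> = T n" using key[of n] eq by simp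
    finally show ?case .
  qed
  have allsub: "T k \<subseteq> T n" for k
  proof (cases "k \<le> n")
    case True then show ?thesis by (rule Tmono)
  next
    case False then have "n \<le> k" by simp
    then show ?thesis using all[of k] by simp
  qed
  have "carrier G \<subseteq> T n"
  proof
    fix x assume x: "x \<in> carrier G"
    have "finite (generate G {x}) \<and> subgroup (generate G {x}) G"
      by (rule cyclic_finite[OF is_group assms(2) x])
    then obtain k where "generate G {x} \<subseteq> orbit_sum G phi S k" using exp by blast
    then have "generate G {x} \<subseteq> T k" unfolding T_def .
    moreover have "x \<in> generate G {x}" by (simp add: generate.incl)
    ultimately show "x \<in> T n" using allsub by blast
  qed
  moreover have "finite (T n)" using sub[of n] by simp
  ultimately show ?thesis by (rule finite_subset)
qed

end
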